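(* Let $A = \langle \Sigma, Q, q_0, \tau, \phi\rangle$ be an NFA in which every state is reachable from the initial state, and let $\Psi$ be a merge operation producing the NFA $\Psi(A)$. If $A$ contains a single closed communicating class, then $\Psi(A)$ also contains a single closed communicating class.
   Context: An NFA $A = \langle \Sigma, Q, q_0, \tau, \phi\rangle$ has finite alphabet $\Sigma$, finite state set $Q$, initial state $q_0$, transition function $\tau : Q\times\Sigma \to 2^Q$, termination function $\phi: Q \to \{0,1\}$; $\tau$ extends to strings by $\tau(q,\lambda)=\{q\}$, $\tau(q,x\sigma) = \bigcup_{q'\in\tau(q,x)}\tau(q',\sigma)$, and $\tau_\star(S) = \bigcup_{q\in S, x\in\Sigma^\star}\tau(q,x)$. A state $q$ is reachable if $q \in \tau_\star(\{q_0\})$. States $q,q'$ communicate if $q' \in \tau_\star(\{q\})$ and $q\in\tau_\star(\{q'\})$; the equivalence classes are communicating classes; a class $Q'$ is closed if $\tau_\star(Q') = Q'$. $\tilde{A} = \langle \Sigma, \tilde{Q}, \tilde{q}_0, \tilde{\tau}, \tilde{\phi}\rangle$ is obtained from $A$ by a merge operation $\Psi : Q \to \tilde{Q}$ if $\Psi$ is surjective, $\Psi(q_0) = \tilde{q}_0$, $\phi(q) = \tilde{\phi}(\Psi(q))$ for all $q \in Q$, and for all $q\in Q$, $\sigma \in \Sigma$, $q' \in \tau(q,\sigma)$ implies $\Psi(q') \in \tilde{\tau}(\Psi(q),\sigma)$; we write $\Psi(A)$ for $\tilde{A}$. *)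

theory Defs
  imports Main
begin

text \<open>An NFA <Sigma, Q, q0, tau, phi>. Transitions leaving Q or using letters outside
  Sigma are irrelevant; well-formedness requires tau to map into Q.\<close>

record ('q, 'a) nfa =
  alphabet :: "'a set"
  states   :: "'q set"
  init     :: 'q
  trans    :: "'q \<Rightarrow> 'a \<Rightarrow> 'q set"
  final    :: "'q \<Rightarrow> bool"

definition is_nfa :: "('q, 'a) nfa \<Rightarrow> bool" where
  "is_nfa A \<longleftrightarrow> finite (alphabet A) \<and> finite (states A) \<and> init A \<in> states A \<and>
     (\<forall>q\<in>states A. \<forall>\<sigma>\<in>alphabet A. trans A q \<sigma> \<subseteq> states A)"

definition tau_word :: "('q, 'a) nfa \<Rightarrow> 'q \<Rightarrow> 'a list \<Rightarrow> 'q set" where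
  "tau_word A q w = foldl (\<lambda>S \<sigma>. \<Union>q'\<in>S. trans A q' \<sigma>) {q} w"

definition tau_star :: "('q, 'a) nfa \<Rightarrow> 'q set \<Rightarrow> 'q set" where
  "tau_star A S = (\<Union>q\<in>S. \<Union>x\<in>lists (alphabet A). tau_word A q x)"

definition reachable :: "('q, 'a) nfa \<Rightarrow> 'q \<Rightarrow> bool" where
  "reachable A q \<longleftrightarrow> q \<in> tau_star A {init A}"

definition communicate :: "('q, 'a) nfa \<Rightarrow> 'q \<Rightarrow> 'q \<Rightarrow> bool" where
  "communicate A q q' \<longleftrightarrow> q' \<in> tau_star A {q} \<and> q \<in> tau_star A {q'}"

definition comm_classes :: "('q, 'a) nfa \<Rightarrow> 'q set set" where
  "comm_classes A = (\<lambda>q. {q' \<in> states A. communicate A q q'}) ` states A"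

definition closed_class :: "('q, 'a) nfa \<Rightarrow> 'q set \<Rightarrow> bool" where
  "closed_class A C \<longleftrightarrow> tau_star A C = C"

definition single_closed_class :: "('q, 'a) nfa \<Rightarrow> bool" where
  "single_closed_class A \<longleftrightarrow> (\<exists>!C. C \<in> comm_classes A \<and> closed_class A C)"

definition merge_op :: "('q, 'a) nfa \<Rightarrow> ('q \<Rightarrow> 'p) \<Rightarrow> ('p, 'a) nfa \<Rightarrow> bool" where
  "merge_op A \<Psi> B \<longleftrightarrow>
     alphabet B = alphabet A \<and>
     \<Psi> ` states A = states B \<and>
     \<Psi> (init A) = init B \<and>
     (\<forall>q\<in>states A. final A q = final B (\<Psi> q)) \<and>
     (\<forall>q\<in>states A. \<forall>\<sigma>\<in>alphabet A. \<forall>q'\<in>trans A q \<sigma>. \<Psi> q' \<in> trans B (\<Psi> q) \<sigma>)"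

end

theory Submission
  imports Defs
begin

definition stp :: "('q, 'a) nfa \<Rightarrow> 'q \<Rightarrow> 'q \<Rightarrow> bool" where
  "stp A q q' \<longleftrightarrow> (\<exists>\<sigma>\<in>alphabet A. q' \<in> trans A q \<sigma>)"

lemma tau_word_snoc: "tau_word A q (w @ [s]) = (\<Union>q'\<in>tau_word A q w. trans A q' s)"
  by (simp add: tau_word_def)

lemma tw_imp: "w \<in> lists (alphabet A) \<Longrightarrow> x \<in> tau_word A q w \<Longrightarrow> (stp A)\<^sup>*\<^sup>* q x"
proof (induction w arbitrary: x rule: rev_induct)
  case Nil then show ?case by (simp add: tau_word_def)
next
  case (snoc s w)
  from snoc.prems(2) obtain y where y: "y \<in> tau_word A q w" "x \<in> trans A y s"
    unfolding tau_word_snoc by (rule UN_E)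
  have ws: "w \<in> lists (alphabet A)" "s \<in> alphabet A" using snoc.prems(1) by simp_all
  have "(stp A)\<^sup>*\<^sup>* q y" using snoc.IH[OF ws(1) y(1)] .
  moreover have "stp A y x" unfolding stp_def using ws(2) y(2) by (rule bexI[rotated])
  ultimately show ?case by (rule rtranclp.rtrancl_into_rtrancl)
qed

lemma imp_tw: "(stp A)\<^sup>*\<^sup>* q x \<Longrightarrow> \<exists>w\<in>lists (alphabet A). x \<in> tau_word A q w"
proof (induction rule: rtranclp_induct)
  case base
  have "q \<in> tau_word A q []" by (simp add: tau_word_def)
  moreover have "[] \<in> lists (alphabet A)" by simp
  ultimately show ?case by (rule bexI)
next
  case (step y z)
  from step.IH obtain w where w: "w \<in> lists (alphabet A)" "y \<in> tau_word A q w" by blast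
  from step(2) obtain s where s: "s \<in> alphabet A" "z \<in> trans A y s" unfolding stp_def by (rule bexE)
  have "z \<in> tau_word A q (w @ [s])" unfolding tau_word_snoc using w(2) s(2) by (rule UN_I)
  moreover have "w @ [s] \<in> lists (alphabet A)" using w s by simp
  ultimately show ?case by (rule bexI)
qed

lemma reach_iff: "x \<in> tau_star A {q} \<longleftrightarrow> (stp A)\<^sup>*\<^sup>* q x"
proof
  assume "x \<in> tau_star A {q}"
  then obtain w where "w \<in> lists (alphabet A)" "x \<in> tau_word A q w"
    unfolding tau_star_def by (simp, metis)
  then show "(stp A)\<^sup>*\<^sup>* q x" by (rule tw_imp)
next
  assume "(stp A)\<^sup>*\<^sup>* q x"
  then obtain w where w1: "w \<in> lists (alphabet A)" and w2: "x \<in> tau_word A q w"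
    using imp_tw by metis
  show "x \<in> tau_star A {q}" unfolding tau_star_def by (rule UN_I[OF singletonI], rule UnionI[OF imageI[of w _ "tau_word A q", OF w1] w2])
qed

lemma tau_star_eq: "tau_star A S = {x. \<exists>q\<in>S. (stp A)\<^sup>*\<^sup>* q x}"
proof -
  have "tau_star A S = (\<Union>q\<in>S. tau_star A {q})" unfolding tau_star_def by blast
  then show ?thesis by (simp add: reach_iff set_eq_iff)
qed

lemma reach_states: assumes "is_nfa A" shows "(stp A)\<^sup>*\<^sup>* q x \<Longrightarrow> q \<in> states A \<Longrightarrow> x \<in> states A"
  by (induction rule: rtranclp_induct) (use assms in \<open>auto simp: is_nfa_def stp_def\<close>)

lemma sim: assumes "is_nfa A" "merge_op A \<Psi> B"
  shows "(stp A)\<^sup>*\<^sup>* q x \<Longrightarrow> q \<in> states A \<Longrightarrow> (stp B)\<^sup>*\<^sup>* (\<Psi> q) (\<Psi> x)"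
proof (induction rule: rtranclp_induct)
  case base then show ?case by simp
next
  case (step y z)
  have "y \<in> states A" using reach_states[OF assms(1) step(1) step(4)] .
  then have "stp B (\<Psi> y) (\<Psi> z)" using step(2) assms(2) unfolding stp_def merge_op_def by fast
  with step show ?case by (meson rtranclp.rtrancl_into_rtrancl)
qed

lemma bottom:
  assumes "is_nfa A"
  shows "q \<in> states A \<Longrightarrow> \<exists>r. (stp A)\<^sup>*\<^sup>* q r \<and> (\<forall>s. (stp A)\<^sup>*\<^sup>* r s \<longrightarrow> (stp A)\<^sup>*\<^sup>* s r)"
proof (induction "card {x. (stp A)\<^sup>*\<^sup>* q x}" arbitrary: q rule: less_induct)
  case less
  show ?case
  proof (cases "\<forall>s. (stp A)\<^sup>*\<^sup>* q s \<longrightarrow> (stp A)\<^sup>*\<^sup>* s q")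
    case True then show ?thesis by blast
  next
    case False
    then obtain s where s: "(stp A)\<^sup>*\<^sup>* q s" "\<not> (stp A)\<^sup>*\<^sup>* s q" by blast
    have fin: "finite {x. (stp A)\<^sup>*\<^sup>* q x}"
    proof (rule finite_subset)
      show "{x. (stp A)\<^sup>*\<^sup>* q x} \<subseteq> states A"
        using reach_states[OF assms _ less.prems] by blast
      show "finite (states A)" using assms by (simp add: is_nfa_def)
    qed
    have "{x. (stp A)\<^sup>*\<^sup>* s x} \<subset> {x. (stp A)\<^sup>*\<^sup>* q x}"
      using s by (auto intro: rtranclp_trans)
    then have "card {x. (stp A)\<^sup>*\<^sup>* s x} < card {x. (stp A)\<^sup>*\<^sup>* q x}"
      using fin by (rule psubset_card_mono[rotated])
    moreover have "s \<in> states A" using reach_states[OF assms s(1) less.prems] .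
    ultimately obtain r where "(stp A)\<^sup>*\<^sup>* s r" "\<forall>t. (stp A)\<^sup>*\<^sup>* r t \<longrightarrow> (stp A)\<^sup>*\<^sup>* t r"
      using less.hyps by blast
    then show ?thesis using s(1) by (meson rtranclp_trans)
  qed
qed

lemma class_closed:
  assumes "is_nfa A" "r \<in> states A" "\<forall>s. (stp A)\<^sup>*\<^sup>* r s \<longrightarrow> (stp A)\<^sup>*\<^sup>* s r"
  shows "{q' \<in> states A. communicate A r q'} \<in> comm_classes A"
    "closed_class A {q' \<in> states A. communicate A r q'}"
proof -
  show "{q' \<in> states A. communicate A r q'} \<in> comm_classes A"
    using assms(2) unfolding comm_classes_def by blast
  have K: "{q' \<in> states A. communicate A r q'} = {x. (stp A)\<^sup>*\<^sup>* r x}"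
    using assms reach_states[OF assms(1) _ assms(2)] unfolding communicate_def reach_iff by blast
  show "closed_class A {q' \<in> states A. communicate A r q'}"
    unfolding closed_class_def K tau_star_eq by (auto intro: rtranclp_trans)
qed

theorem lemma6:
  fixes A :: "('q, 'a) nfa" and B :: "('p, 'a) nfa" and \<Psi> :: "'q \<Rightarrow> 'p"
  assumes "is_nfa A" and "is_nfa B"
    and "\<forall>q\<in>states A. reachable A q"
    and "merge_op A \<Psi> B"
    and "single_closed_class A"
  shows "single_closed_class B"
proof -
  obtain C where C: "C \<in> comm_classes A" "closed_class A C"
    and Cu: "\<And>D. D \<in> comm_classes A \<Longrightarrow> closed_class A D \<Longrightarrow> D = C"
    using assms(5) unfolding single_closed_class_def by blast
  obtain c0 where c0: "c0 \<in> states A" "C = {q' \<in> states A. communicate A c0 q'}"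
    using C(1) unfolding comm_classes_def by blast
  have toc0: "(stp A)\<^sup>*\<^sup>* q c0" if q: "q \<in> states A" for q
  proof -
    obtain r where r: "(stp A)\<^sup>*\<^sup>* q r" "\<forall>s. (stp A)\<^sup>*\<^sup>* r s \<longrightarrow> (stp A)\<^sup>*\<^sup>* s r"
      using bottom[OF assms(1) q] by blast
    have rs: "r \<in> states A" using reach_states[OF assms(1) r(1) q] .
    have "{q' \<in> states A. communicate A r q'} = C"
      using class_closed[OF assms(1) rs r(2)] Cu by blast
    then have "c0 \<in> {q' \<in> states A. communicate A r q'}"
      using c0 by (simp add: communicate_def reach_iff)
    then have "(stp A)\<^sup>*\<^sup>* r c0" by (simp add: communicate_def reach_iff)
    with r(1) show ?thesis by (rule rtranclp_trans)
  qed
  define p0 where "p0 = \<Psi> c0"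
  have sB: "\<Psi> ` states A = states B" using assms(4) by (simp add: merge_op_def)
  have "\<Psi> c0 \<in> \<Psi> ` states A" using c0(1) by (rule imageI)
  then have p0s: "p0 \<in> states B" by (simp only: p0_def sB)
  have top0: "(stp B)\<^sup>*\<^sup>* p p0" if "p \<in> states B" for p
  proof -
    have "p \<in> \<Psi> ` states A" using that by (simp only: sB)
    then obtain q where q: "p = \<Psi> q" "q \<in> states A" by (rule imageE)
    show ?thesis unfolding q(1) p0_def by (rule sim[OF assms(1) assms(4) toc0[OF q(2)] q(2)])
  qed
  define D where "D = {q' \<in> states B. communicate B p0 q'}"
  have bk: "\<forall>s. (stp B)\<^sup>*\<^sup>* p0 s \<longrightarrow> (stp B)\<^sup>*\<^sup>* s p0"
  proof (intro allI impI)
    fix s assume "(stp B)\<^sup>*\<^sup>* p0 s"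
    then have "s \<in> states B" using reach_states[OF assms(2) _ p0s] by simp
    then show "(stp B)\<^sup>*\<^sup>* s p0" by (rule top0)
  qed
  have Dcc: "D \<in> comm_classes B" "closed_class B D"
    unfolding D_def using class_closed[OF assms(2) p0s bk] by auto
  show ?thesis unfolding single_closed_class_def
  proof (rule ex1I[of _ D])
    show "D \<in> comm_classes B \<and> closed_class B D" using Dcc by blast
  next
    fix D' assume D': "D' \<in> comm_classes B \<and> closed_class B D'"
    then obtain p' where p': "p' \<in> states B" "D' = {q' \<in> states B. communicate B p' q'}"
      unfolding comm_classes_def by blast
    have "p' \<in> D'" using p' by (simp add: communicate_def reach_iff)
    then have "p0 \<in> tau_star B D'" using top0[OF p'(1)] by (auto simp: tau_star_eq)
    then have "p0 \<in> D'" using D' by (simp add: closed_class_def)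
    then have cm: "(stp B)\<^sup>*\<^sup>* p' p0" "(stp B)\<^sup>*\<^sup>* p0 p'"
      using p' by (auto simp: communicate_def reach_iff)
    show "D' = D" unfolding p'(2) D_def communicate_def reach_iff
    proof (rule Collect_cong, rule conj_cong[OF refl])
      fix x
      show "((stp B)\<^sup>*\<^sup>* p' x \<and> (stp B)\<^sup>*\<^sup>* x p') = ((stp B)\<^sup>*\<^sup>* p0 x \<and> (stp B)\<^sup>*\<^sup>* x p0)"
        using cm rtranclp_trans[of "stp B"] by metis
    qed
  qed
qed

end
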